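(* Suppose $l$ is $(M,m)$-(restricted smooth, restricted strongly concave) on $\Omega_{2k}$. Then for all subsets $\mathsf{S},\mathsf{T}\subseteq[n]$ of size at most $k$, $$2M\sum_{j\in\mathsf{T}}f_{\mathsf{S}}(j)\ \ge\ \|\nabla l(\boldsymbol\beta^{(\mathsf{S})})_{\mathsf{T}}\|_2^2\ \ge\ 2m\sum_{j\in\mathsf{T}}f_{\mathsf{S}}(j).$$
   Context: $\Omega_r=\{(\mathbf{x},\mathbf{y})\in\mathbb{R}^n\times\mathbb{R}^n:\|\mathbf{x}\|_0\le r,\|\mathbf{y}\|_0\le r,\|\mathbf{x}-\mathbf{y}\|_0\le r\}$. A differentiable $l:\mathbb{R}^n\to\mathbb{R}$ is $(M,m)$-(restricted smooth, restricted strongly concave) on $\Omega_r$ if for all $(\mathbf{x},\mathbf{y})\in\Omega_r$: $-\tfrac{m}{2}\|\mathbf{y}-\mathbf{x}\|_2^2\ge l(\mathbf{y})-l(\mathbf{x})-\langle\nabla l(\mathbf{x}),\mathbf{y}-\mathbf{x}\rangle\ge -\tfrac{M}{2}\|\mathbf{y}-\mathbf{x}\|_2^2$, with $m,M>0$. For $\mathsf{S}\subseteq[n]$, $\boldsymbol\beta^{(\mathsf{S})}$ is a maximizer of $l$ over vectors supported in $\mathsf{S}$, $f(\mathsf{S})=l(\boldsymbol\beta^{(\mathsf{S})})-l(\mathbf{0})$, and $f_{\mathsf{S}}(j)=f(\mathsf{S}\cup\{j\})-f(\mathsf{S})$. $\mathbf{e}_j$ is the $j$-th unit vector and $\|\nabla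 l(\boldsymbol\beta)_{\mathsf{T}}\|_2^2=\sum_{j\in\mathsf{T}}\langle\nabla l(\boldsymbol\beta),\mathbf{e}_j\rangle^2$. *)

theory Defs
  imports "HOL-Analysis.Analysis"
begin

text \<open>Vectors in R^n are modelled as real^'n for a finite index type 'n (n = CARD('n)).\<close>

definition l0norm :: "real^'n \<Rightarrow> nat" where
  "l0norm x = card {i. x $ i \<noteq> 0}"

definition Omega :: "nat \<Rightarrow> ((real^'n) \<times> (real^'n)) set" where
  "Omega r = {(x, y). l0norm x \<le> r \<and> l0norm y \<le> r \<and> l0norm (x - y) \<le> r}"

definition rsm_rsc ::
  "(real^'n \<Rightarrow> real) \<Rightarrow> (real^'n \<Rightarrow> real^'n) \<Rightarrow> real \<Rightarrow> real \<Rightarrow> nat \<Rightarrow> bool" where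
  "rsm_rsc l grad M m r \<longleftrightarrow> M > 0 \<and> m > 0 \<and>
     (\<forall>(x, y) \<in> Omega r.
        - m / 2 * (norm (y - x))^2 \<ge> l y - l x - grad x \<bullet> (y - x) \<and>
        l y - l x - grad x \<bullet> (y - x) \<ge> - M / 2 * (norm (y - x))^2)"

definition supported_in :: "real^'n \<Rightarrow> 'n set \<Rightarrow> bool" where
  "supported_in x S \<longleftrightarrow> (\<forall>i. i \<notin> S \<longrightarrow> x $ i = 0)"

definition betaS :: "(real^'n \<Rightarrow> real) \<Rightarrow> 'n set \<Rightarrow> real^'n" where
  "betaS l S = (SOME b. supported_in b S \<and> (\<forall>y. supported_in y S \<longrightarrow> l y \<le> l b))"

definition fS :: "(real^'n \<Rightarrow> real) \<Rightarrow> 'n set \<Rightarrow> real" where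
  "fS l S = l (betaS l S) - l 0"

definition marg :: "(real^'n \<Rightarrow> real) \<Rightarrow> 'n set \<Rightarrow> 'n \<Rightarrow> real" where
  "marg l S j = fS l (insert j S) - fS l S"

end

theory Submission
  imports Defs
begin

lemma l0_le: "supported_in (x::real^'n) A \<Longrightarrow> l0norm x \<le> card A"
  unfolding l0norm_def supported_in_def
  by (intro card_mono) (auto intro: finite_subset)

lemma supp_diff: "supported_in (x::real^'n) A \<Longrightarrow> supported_in y A \<Longrightarrow> supported_in (x - y) A"
  unfolding supported_in_def by auto

lemma supp_add: "supported_in (x::real^'n) A \<Longrightarrow> supported_in y A \<Longrightarrow> supported_in (x + y) A"
  unfolding supported_in_def by auto

lemma supp_axis: "j \<in> A \<Longrightarrow> supported_in (axis j t :: real^'n) A"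
  unfolding supported_in_def axis_def by auto

lemma supp_mono: "supported_in (x::real^'n) A \<Longrightarrow> A \<subseteq> B \<Longrightarrow> supported_in x B"
  unfolding supported_in_def by auto

lemma supp_zero: "supported_in (0::real^'n) A"
  unfolding supported_in_def by auto

lemma inOmega: "supported_in (x::real^'n) A \<Longrightarrow> supported_in y A \<Longrightarrow> card A \<le> r \<Longrightarrow> (x, y) \<in> Omega r"
  unfolding Omega_def using l0_le[of x A] l0_le[of y A] l0_le[of "x - y" A] supp_diff[of x A y]
  by auto

lemma rs_up: "rsm_rsc l grad M m r \<Longrightarrow> (x, y) \<in> Omega r \<Longrightarrow>
   l y - l x - grad x \<bullet> (y - x) \<le> - m / 2 * (norm (y - x))^2"
  unfolding rsm_rsc_def by auto

lemma rs_lo: "rsm_rsc l grad M m r \<Longrightarrow> (x, y) \<in> Omega r \<Longrightarrow>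
   l y - l x - grad x \<bullet> (y - x) \<ge> - M / 2 * (norm (y - x))^2"
  unfolding rsm_rsc_def by auto

lemma norm_axis_sq: "(norm (axis j t :: real^'n))^2 = t^2"
proof -
  have "(norm (axis j t :: real^'n))^2 = axis j t \<bullet> (axis j t :: real^'n)" by (rule power2_norm_eq_inner)
  also have "\<dots> = t * t" by (simp add: inner_axis_axis)
  finally show ?thesis by (simp add: power2_eq_square)
qed

lemma exists_max:
  fixes l :: "real^'n \<Rightarrow> real" and grad :: "real^'n \<Rightarrow> real^'n"
  assumes reg: "rsm_rsc l grad M m r" and cont: "continuous_on UNIV l"
    and A: "card A \<le> r"
  shows "supported_in (betaS l A) A \<and> (\<forall>y. supported_in y A \<longrightarrow> l y \<le> l (betaS l A))"
proof -
  have mpos: "m > 0" using reg unfolding rsm_rsc_def by auto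
  define K where "K = {y. (\<forall>i. i \<notin> A \<longrightarrow> y $ i = 0) \<and> l 0 \<le> l y}"
  have closedK: "closed K"
    unfolding K_def
    by (intro closed_Collect_conj closed_Collect_all closed_Collect_imp closed_Collect_eq
          closed_Collect_le continuous_intros continuous_on_const cont) auto
  have bnd: "norm y \<le> 2 * norm (grad 0) / m" if "y \<in> K" for y
  proof -
    have sy: "supported_in y A" using that unfolding K_def supported_in_def by auto
    have "(0, y) \<in> Omega r" using inOmega[OF supp_zero sy A] .
    from rs_up[OF reg this] have "l y - l 0 - grad 0 \<bullet> y \<le> - m / 2 * (norm y)^2" by simp
    moreover have "l 0 \<le> l y" using that unfolding K_def by auto
    moreover have "grad 0 \<bullet> y \<le> norm (grad 0) * norm y" by (rule norm_cauchy_schwarz)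
    ultimately have h: "m / 2 * (norm y)^2 \<le> norm (grad 0) * norm y" by linarith
    show ?thesis
    proof (cases "norm y = 0")
      case True then show ?thesis using mpos by simp
    next
      case False
      then have "norm y > 0" by simp
      from h have "(m / 2 * norm y) * norm y \<le> norm (grad 0) * norm y"
        by (simp add: power2_eq_square mult.assoc)
      then have "m / 2 * norm y \<le> norm (grad 0)"
        using \<open>norm y > 0\<close> by (simp add: mult_le_cancel_right)
      then show ?thesis using mpos by (simp add: field_simps)
    qed
  qed
  have "bounded K" unfolding bounded_iff using bnd by blast
  then have "compact K" using closedK by (simp add: compact_eq_bounded_closed)
  moreover have "0 \<in> K" unfolding K_def by auto
  then have "K \<noteq> {}" by blast
  ultimately obtain b where b: "b \<in> K" "\<forall>y\<in>K. l y \<le> l b"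
    using continuous_attains_sup[of K l] continuous_on_subset[OF cont] by blast
  have P: "supported_in b A \<and> (\<forall>y. supported_in y A \<longrightarrow> l y \<le> l b)"
  proof
    show "supported_in b A" using b(1) unfolding K_def supported_in_def by auto
    show "\<forall>y. supported_in y A \<longrightarrow> l y \<le> l b"
    proof (intro allI impI)
      fix y assume "supported_in y A"
      show "l y \<le> l b"
      proof (cases "l 0 \<le> l y")
        case True
        then have "y \<in> K" using \<open>supported_in y A\<close> unfolding K_def supported_in_def by auto
        then show ?thesis using b by auto
      next
        case False
        have "l 0 \<le> l b" using b(1) unfolding K_def by auto
        then show ?thesis using False by linarith
      qed
    qed
  qed
  show ?thesis unfolding betaS_def by (rule someI[of _ b]) (rule P)
qed

lemma first_order:
  fixes l :: "real^'n \<Rightarrow> real" and grad :: "real^'n \<Rightarrow> real^'n"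
  assumes reg: "rsm_rsc l grad M m r" and sb: "supported_in b A"
    and mx: "\<forall>y. supported_in y A \<longrightarrow> l y \<le> l b" and A: "card A \<le> r" and i: "i \<in> A"
  shows "grad b $ i = 0"
proof -
  have Mpos: "M > 0" using reg unfolding rsm_rsc_def by auto
  define g where "g = grad b $ i"
  define t where "t = g / M"
  define y where "y = b + axis i t"
  have sy: "supported_in y A" unfolding y_def by (intro supp_add sb supp_axis i)
  have "(b, y) \<in> Omega r" by (rule inOmega[OF sb sy A])
  from rs_lo[OF reg this] have "l y - l b - grad b \<bullet> axis i t \<ge> - M / 2 * t^2"
    unfolding y_def by (simp add: norm_axis_sq)
  moreover have "grad b \<bullet> axis i t = g * t" by (simp add: inner_axis g_def)
  moreover have "l y \<le> l b" using mx sy by auto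
  ultimately have "g * t \<le> M / 2 * t^2" by linarith
  then have "g^2 / M \<le> g^2 / (2*M)" unfolding t_def using Mpos
    by (simp add: power2_eq_square field_simps)
  then have "g^2 \<le> 0" using Mpos by (simp add: field_simps)
  then show ?thesis unfolding g_def by simp
qed

theorem mainTheorem3:
  fixes l :: "real^'n \<Rightarrow> real" and grad :: "real^'n \<Rightarrow> real^'n"
    and M m :: real and k :: nat and S T :: "'n set"
  assumes grad: "\<And>x. (l has_derivative (\<lambda>h. grad x \<bullet> h)) (at x)"
    and reg: "rsm_rsc l grad M m (2 * k)"
    and S: "card S \<le> k" and T: "card T \<le> k"
  shows "2 * M * (\<Sum>j\<in>T. marg l S j) \<ge> (\<Sum>j\<in>T. (grad (betaS l S) \<bullet> axis j 1)^2)
       \<and> (\<Sum>j\<in>T. (grad (betaS l S) \<bullet> axis j 1)^2) \<ge> 2 * m * (\<Sum>j\<in>T. marg l S j)"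
proof -
  have Mpos: "M > 0" and mpos: "m > 0" using reg unfolding rsm_rsc_def by auto
  have cont: "continuous_on UNIV l"
    by (intro continuous_at_imp_continuous_on ballI has_derivative_continuous[OF grad])
  define b where "b = betaS l S"
  define g where "g = grad b"
  have S2: "card S \<le> 2 * k" using S by simp
  from exists_max[OF reg cont S2] have sb: "supported_in b S"
    and mb: "\<forall>y. supported_in y S \<longrightarrow> l y \<le> l b" unfolding b_def by auto
  have gS: "g $ i = 0" if "i \<in> S" for i
    unfolding g_def by (rule first_order[OF reg sb mb S2 that])
  have key: "(g $ j)^2 \<le> 2 * M * marg l S j \<and> 2 * m * marg l S j \<le> (g $ j)^2" if jT: "j \<in> T" for j
  proof (cases "j \<in> S")
    case True
    then have "marg l S j = 0" unfolding marg_def by (simp add: insert_absorb)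
    then show ?thesis using gS[OF True] by simp
  next
    case False
    have "card T \<ge> 1" using jT by (metis One_nat_def Suc_leI card_gt_0_iff finite emptyE)
    then have k1: "k \<ge> 1" using T by simp
    define A where "A = insert j S"
    have cA: "card A \<le> 2 * k" unfolding A_def using S k1 False
      by (simp add: card_insert_if)
    from exists_max[OF reg cont cA] have sb': "supported_in (betaS l A) A"
      and mb': "\<forall>y. supported_in y A \<longrightarrow> l y \<le> l (betaS l A)" by auto
    define b' where "b' = betaS l A"
    have sbA: "supported_in b A" using sb unfolding A_def by (rule supp_mono) auto
    have marg_eq: "marg l S j = l b' - l b"
      unfolding marg_def fS_def b'_def b_def A_def by simp
    define t where "t = g $ j / M"
    define y where "y = b + axis j t"
    have sy: "supported_in y A" unfolding y_def A_def
      by (intro supp_add supp_axis) (use sbA A_def in auto)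
    have "(b, y) \<in> Omega (2*k)" by (rule inOmega[OF sbA sy cA])
    from rs_lo[OF reg this] have "l y - l b - g \<bullet> axis j t \<ge> - M / 2 * t^2"
      unfolding y_def g_def by (simp add: norm_axis_sq)
    moreover have "g \<bullet> axis j t = g $ j * t" by (simp add: inner_axis)
    moreover have "l y \<le> l b'" using mb' sy unfolding b'_def by auto
    ultimately have "g $ j * t - M / 2 * t^2 \<le> marg l S j" unfolding marg_eq by linarith
    then have "(g $ j)^2 / (2 * M) \<le> marg l S j" unfolding t_def using Mpos
      by (simp add: power2_eq_square field_simps)
    then have up: "(g $ j)^2 \<le> 2 * M * marg l S j" using Mpos by (simp add: field_simps)
    define d where "d = b' - b"
    have sd: "supported_in d A" unfolding d_def by (rule supp_diff[OF _ sbA]) (simp add: b'_def sb')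
    have "(b, b') \<in> Omega (2*k)" by (rule inOmega[OF sbA _ cA]) (simp add: b'_def sb')
    from rs_up[OF reg this] have h1: "l b' - l b - g \<bullet> d \<le> - m / 2 * (norm d)^2"
      unfolding g_def d_def .
    have "g \<bullet> d = (\<Sum>i\<in>UNIV. g $ i * d $ i)" by (simp add: inner_vec_def)
    also have "\<dots> = (\<Sum>i\<in>{j}. g $ i * d $ i)"
    proof (rule sum.mono_neutral_right)
      show "\<forall>i\<in>UNIV - {j}. g $ i * d $ i = 0"
      proof
        fix i assume "i \<in> UNIV - {j}"
        then show "g $ i * d $ i = 0"
          using gS[of i] sd unfolding supported_in_def A_def by auto
      qed
    qed auto
    finally have gd: "g \<bullet> d = g $ j * d $ j" by simp
    have "\<bar>d $ j\<bar>^2 \<le> (norm d)^2"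
      using component_le_norm_cart[of d j] by (intro power_mono) auto
    then have "(d $ j)^2 \<le> (norm d)^2" by simp
    then have "m / 2 * (d $ j)^2 \<le> m / 2 * (norm d)^2"
      using mpos by (intro mult_left_mono) auto
    then have "marg l S j \<le> g $ j * d $ j - m / 2 * (d $ j)^2"
      using h1 gd marg_eq by linarith
    also have "\<dots> \<le> (g $ j)^2 / (2 * m)"
    proof -
      have "0 \<le> (g $ j - m * d $ j)^2 / (2 * m)" using mpos by simp
      then show ?thesis using mpos by (simp add: power2_eq_square field_simps)
    qed
    finally have lo: "2 * m * marg l S j \<le> (g $ j)^2" using mpos by (simp add: field_simps)
    show ?thesis using up lo by simp
  qed
  have ax: "grad (betaS l S) \<bullet> axis j 1 = g $ j" for j by (simp add: inner_axis g_def b_def)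
  have "(\<Sum>j\<in>T. (g $ j)^2) \<le> (\<Sum>j\<in>T. 2 * M * marg l S j)" by (rule sum_mono) (use key in auto)
  moreover have "(\<Sum>j\<in>T. 2 * m * marg l S j) \<le> (\<Sum>j\<in>T. (g $ j)^2)" by (rule sum_mono) (use key in auto)
  ultimately show ?thesis unfolding ax by (simp add: sum_distrib_left)
qed

end
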